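(* Let $n\ge1$ and let $T$ be the adjacency matrix of the Kneser graph $K(2n+1,n)$: its rows and columns are indexed by the $n$-element subsets of $\{1,\dots,2n+1\}$, with $(A,B)$ entry $1$ if $A\cap B=\emptyset$ and $0$ otherwise. Let $\mathcal T$ be the commutant of the natural permutation action of $\mathfrak S_{2n+1}$ on these subsets. Then \[\|T\|_m=\|S_T|_{\mathcal T}\|=\frac{2^{2n}}{\binom{2n+1}n}=\frac{4\cdot6\cdots(2n+2)}{3\cdot5\cdots(2n+1)}=\prod_{i=1}^n\Big(1+\frac1{2i+1}\Big)>\frac12\log(2n+3).\]
   Context: For a matrix $T=[t_{AB}]$, $S_T$ denotes the Schur multiplier $R=[r_{AB}]\mapsto[t_{AB}r_{AB}]$ on matrices indexed by the same set (with the operator norm), $\|T\|_m$ its norm, and $\|S_T|_{\mathcal T}\|$ the norm of its restriction to $\mathcal T$. The action is $\sigma\cdot e_A=e_{\sigma(A)}$ on the Hilbert space with orthonormal basis indexed by the $n$-element subsets. *)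

theory Defs
  imports Complex_Main "HOL-Combinatorics.Permutations"
begin

text \<open>Matrices indexed by a finite set I are functions I \<Rightarrow> I \<Rightarrow> complex
  (values outside I are irrelevant); they act on the Hilbert space of functions
  I \<Rightarrow> complex with the l2 norm.\<close>

definition vnorm :: "'a set \<Rightarrow> ('a \<Rightarrow> complex) \<Rightarrow> real" where
  "vnorm I x = sqrt (\<Sum>i\<in>I. (cmod (x i))^2)"

definition mat_apply :: "'a set \<Rightarrow> ('a \<Rightarrow> 'a \<Rightarrow> complex) \<Rightarrow> ('a \<Rightarrow> complex) \<Rightarrow> ('a \<Rightarrow> complex)" where
  "mat_apply I R x = (\<lambda>i. \<Sum>j\<in>I. R i j * x j)"

definition mat_mult :: "'a set \<Rightarrow> ('a \<Rightarrow> 'a \<Rightarrow> complex) \<Rightarrow> ('a \<Rightarrow> 'a \<Rightarrow> complex) \<Rightarrow> ('a \<Rightarrow> 'a \<Rightarrow> complex)" where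
  "mat_mult I R S = (\<lambda>i k. \<Sum>j\<in>I. R i j * S j k)"

definition opnorm :: "'a set \<Rightarrow> ('a \<Rightarrow> 'a \<Rightarrow> complex) \<Rightarrow> real" where
  "opnorm I R = Sup {vnorm I (mat_apply I R x) | x. vnorm I x \<le> 1}"

definition schur :: "('a \<Rightarrow> 'a \<Rightarrow> complex) \<Rightarrow> ('a \<Rightarrow> 'a \<Rightarrow> complex) \<Rightarrow> ('a \<Rightarrow> 'a \<Rightarrow> complex)" where
  "schur T R = (\<lambda>i j. T i j * R i j)"

definition schur_norm_on :: "'a set \<Rightarrow> ('a \<Rightarrow> 'a \<Rightarrow> complex) \<Rightarrow> ('a \<Rightarrow> 'a \<Rightarrow> complex) set \<Rightarrow> real" where
  "schur_norm_on I T Sub = Sup {opnorm I (schur T R) | R. R \<in> Sub \<and> opnorm I R \<le> 1}"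

definition schur_norm :: "'a set \<Rightarrow> ('a \<Rightarrow> 'a \<Rightarrow> complex) \<Rightarrow> real" where
  "schur_norm I T = schur_norm_on I T UNIV"

definition kneser_vertices :: "nat \<Rightarrow> nat set set" where
  "kneser_vertices n = {A. A \<subseteq> {1..2*n+1} \<and> card A = n}"

definition kneser_adj :: "nat set \<Rightarrow> nat set \<Rightarrow> complex" where
  "kneser_adj A B = (if A \<inter> B = {} then 1 else 0)"

text \<open>Permutation matrix of sigma: sigma e_B = e_{sigma(B)}, so entry (A,B) is 1 iff A = sigma ` B.\<close>
definition perm_mat :: "(nat \<Rightarrow> nat) \<Rightarrow> nat set \<Rightarrow> nat set \<Rightarrow> complex" where
  "perm_mat \<sigma> A B = (if A = \<sigma> ` B then 1 else 0)"

definition kneser_commutant :: "nat \<Rightarrow> (nat set \<Rightarrow> nat set \<Rightarrow> complex) set" where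
  "kneser_commutant n = {R. \<forall>\<sigma>. \<sigma> permutes {1..2*n+1} \<longrightarrow>
     (\<forall>A\<in>kneser_vertices n. \<forall>B\<in>kneser_vertices n.
        mat_mult (kneser_vertices n) (perm_mat \<sigma>) R A B = mat_mult (kneser_vertices n) R (perm_mat \<sigma>) A B)}"

end

theory Submission
  imports Defs "HOL-Computational_Algebra.Polynomial" "HOL-Analysis.L2_Norm"
begin


type_synonym 'a rmat = "'a \<Rightarrow> 'a \<Rightarrow> real"

definition mmr :: "'a set \<Rightarrow> 'a set \<Rightarrow> 'a set \<Rightarrow> 'a rmat \<Rightarrow> 'a rmat \<Rightarrow> 'a rmat" where
  "mmr I J K M N = (\<lambda>a b. if a \<in> I \<and> b \<in> K then (\<Sum>j\<in>J. M a j * N j b) else 0)"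

abbreviation mm :: "'a set \<Rightarrow> 'a rmat \<Rightarrow> 'a rmat \<Rightarrow> 'a rmat" where "mm I \<equiv> mmr I I I"

definition idm :: "'a set \<Rightarrow> 'a rmat" where "idm I = (\<lambda>a b. if a \<in> I \<and> a = b then 1 else 0)"
definition zm :: "'a rmat" where "zm = (\<lambda>a b. 0)"
definition madd :: "'a rmat \<Rightarrow> 'a rmat \<Rightarrow> 'a rmat" where "madd M N = (\<lambda>a b. M a b + N a b)"
definition msc :: "real \<Rightarrow> 'a rmat \<Rightarrow> 'a rmat" where "msc c M = (\<lambda>a b. c * M a b)"
definition msupp :: "'a set \<Rightarrow> 'a set \<Rightarrow> 'a rmat \<Rightarrow> bool" where
  "msupp I K M \<longleftrightarrow> (\<forall>a b. M a b \<noteq> 0 \<longrightarrow> a \<in> I \<and> b \<in> K)"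

definition peval :: "'a set \<Rightarrow> real poly \<Rightarrow> 'a rmat \<Rightarrow> 'a rmat" where
  "peval I p M = fold_coeffs (\<lambda>c P. madd (msc c (idm I)) (mm I M P)) p zm"

lemma mmr_assoc: "mmr I J L (mmr I K J M N) P = mmr I K L M (mmr K J L N P)"
proof (rule ext, rule ext)
  fix a b
  show "mmr I J L (mmr I K J M N) P a b = mmr I K L M (mmr K J L N P) a b"
  proof (cases "a \<in> I \<and> b \<in> L")
    case True
    have "(\<Sum>j\<in>J. (if a \<in> I \<and> j \<in> J then \<Sum>k\<in>K. M a k * N k j else 0) * P j b)
        = (\<Sum>j\<in>J. \<Sum>k\<in>K. M a k * N k j * P j b)"
      using True by (intro sum.cong) (auto simp: sum_distrib_right)
    also have "\<dots> = (\<Sum>k\<in>K. \<Sum>j\<in>J. M a k * N k j * P j b)" by (rule sum.swap)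
    also have "\<dots> = (\<Sum>k\<in>K. M a k * (if k \<in> K \<and> b \<in> L then \<Sum>j\<in>J. N k j * P j b else 0))"
      using True by (intro sum.cong) (auto simp: sum_distrib_left mult.assoc)
    finally show ?thesis using True by (simp add: mmr_def)
  qed (auto simp: mmr_def)
qed

lemma msupp_mmr[simp]: "msupp I K (mmr I J K M N)" by (auto simp: msupp_def mmr_def)
lemma msupp_idm[simp]: "msupp I I (idm I)" by (auto simp: msupp_def idm_def)
lemma msupp_zm[simp]: "msupp I K zm" by (auto simp: msupp_def zm_def)
lemma msupp_madd[simp]: "msupp I K M \<Longrightarrow> msupp I K N \<Longrightarrow> msupp I K (madd M N)"
  unfolding msupp_def madd_def by (metis add.right_neutral)
lemma msupp_msc[simp]: "msupp I K M \<Longrightarrow> msupp I K (msc c M)" by (auto simp: msupp_def msc_def)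

lemma mmr_idm_left: "finite I \<Longrightarrow> msupp I K N \<Longrightarrow> mmr I I K (idm I) N = N"
  unfolding mmr_def idm_def msupp_def
  by (intro ext) (auto simp: if_distrib[of "\<lambda>x. x * _"] cong: if_cong)

lemma mmr_idm_right: "finite K \<Longrightarrow> msupp I K N \<Longrightarrow> mmr I K K N (idm K) = N"
  unfolding mmr_def idm_def msupp_def
  by (intro ext) (auto simp: if_distrib[of "\<lambda>x. _ * x"] cong: if_cong)

lemma mmr_zm_left[simp]: "mmr I J K zm N = zm" by (intro ext) (auto simp: mmr_def zm_def)
lemma mmr_zm_right[simp]: "mmr I J K N zm = zm" by (intro ext) (auto simp: mmr_def zm_def)
lemma madd_zm[simp]: "madd zm M = M" "madd M zm = M" by (auto simp: madd_def zm_def)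
lemma msc_zero[simp]: "msc 0 M = zm" by (auto simp: msc_def zm_def)
lemma msc_zm[simp]: "msc c zm = zm" by (auto simp: msc_def zm_def)
lemma msc_one[simp]: "msc 1 M = M" by (intro ext) (auto simp: msc_def)

lemma mmr_madd_left: "mmr I J K (madd M N) P = madd (mmr I J K M P) (mmr I J K N P)"
  by (intro ext) (auto simp: mmr_def madd_def sum.distrib algebra_simps)
lemma mmr_madd_right: "mmr I J K P (madd M N) = madd (mmr I J K P M) (mmr I J K P N)"
  by (intro ext) (auto simp: mmr_def madd_def sum.distrib algebra_simps)
lemma mmr_msc_left: "mmr I J K (msc c M) P = msc c (mmr I J K M P)"
  by (intro ext) (auto simp: mmr_def msc_def sum_distrib_left algebra_simps)
lemma mmr_msc_right: "mmr I J K P (msc c M) = msc c (mmr I J K P M)"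
  by (intro ext) (auto simp: mmr_def msc_def sum_distrib_left algebra_simps)
lemma madd_assoc: "madd (madd M N) P = madd M (madd N P)" by (intro ext) (auto simp: madd_def)
lemma madd_comm: "madd M N = madd N M" by (intro ext) (auto simp: madd_def)
lemma msc_madd: "msc c (madd M N) = madd (msc c M) (msc c N)" by (intro ext) (auto simp: madd_def msc_def algebra_simps)
lemma madd_msc: "madd (msc c M) (msc d M) = msc (c + d) M" by (intro ext) (auto simp: madd_def msc_def algebra_simps)
lemma msc_msc: "msc c (msc d M) = msc (c * d) M" by (intro ext) (auto simp: msc_def)

lemma peval_0[simp]: "peval I 0 M = zm" by (simp add: peval_def)

lemma peval_pCons: "peval I (pCons a p) M = madd (msc a (idm I)) (mm I M (peval I p M))"
proof (cases "p = 0 \<and> a = 0")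
  case True then show ?thesis by simp
next
  case False
  then have "fold_coeffs (\<lambda>c P. madd (msc c (idm I)) (mm I M P)) (pCons a p) =
     (\<lambda>c P. madd (msc c (idm I)) (mm I M P)) a \<circ> fold_coeffs (\<lambda>c P. madd (msc c (idm I)) (mm I M P)) p"
    using fold_coeffs_pCons_coeff_not_0_eq fold_coeffs_pCons_not_0_0_eq by blast
  then show ?thesis by (simp add: peval_def)
qed

lemma msupp_peval[simp]: "msupp I I (peval I p M)"
  by (induct p rule: pCons_induct) (auto simp: peval_pCons)

lemma peval_add: "peval I (p + q) M = madd (peval I p M) (peval I q M)"
proof (induct p arbitrary: q rule: pCons_induct)
  case 0 then show ?case by simp
next
  case (pCons a p)
  obtain b q' where q: "q = pCons b q'" by (cases q) auto
  have "peval I (pCons a p + q) M = madd (msc (a+b) (idm I)) (mm I M (madd (peval I p M) (peval I q' M)))"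
    using pCons by (simp add: q peval_pCons)
  also have "\<dots> = madd (peval I (pCons a p) M) (peval I q M)"
    unfolding q peval_pCons mmr_madd_right by (intro ext) (simp add: madd_def msc_def algebra_simps)
  finally show ?case .
qed

lemma peval_smult: "peval I (smult c p) M = msc c (peval I p M)"
  by (induct p rule: pCons_induct)
     (auto simp: peval_pCons msc_madd msc_msc mmr_msc_right)

lemma peval_pCons0: "peval I (pCons 0 p) M = mm I M (peval I p M)"
  by (simp add: peval_pCons)

lemma peval_const: "peval I [:c:] M = msc c (idm I)"
  by (simp add: peval_pCons)

lemma peval_mult: "finite I \<Longrightarrow> peval I (p * q) M = mm I (peval I p M) (peval I q M)"
proof (induct p rule: pCons_induct)
  case 0 then show ?case by simp
next
  case (pCons a p)
  have "peval I (pCons a p * q) M = madd (msc a (peval I q M)) (mm I M (peval I (p * q) M))"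
    by (simp add: mult_pCons_left peval_add peval_smult peval_pCons0)
  also have "\<dots> = madd (msc a (peval I q M)) (mm I (mm I M (peval I p M)) (peval I q M))"
    using pCons by (simp add: mmr_assoc)
  also have "\<dots> = mm I (peval I (pCons a p) M) (peval I q M)"
    using pCons by (simp add: peval_pCons mmr_madd_left mmr_msc_left mmr_idm_left)
  finally show ?case .
qed

lemma peval_X: "finite I \<Longrightarrow> msupp I I M \<Longrightarrow> peval I [:0,1:] M = M"
  by (simp add: peval_pCons mmr_idm_right)

lemma peval_one: "peval I 1 M = idm I"
  by (simp add: one_pCons peval_pCons)

lemma peval_minus: "peval I (p - q) M = madd (peval I p M) (msc (-1) (peval I q M))"
proof -
  have "p - q = p + smult (-1) q" by simp
  then show ?thesis by (simp only: peval_add peval_smult)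
qed

definition mT :: "'a rmat \<Rightarrow> 'a rmat" where "mT M = (\<lambda>a b. M b a)"
definition mtr :: "'a set \<Rightarrow> 'a rmat \<Rightarrow> real" where "mtr I M = (\<Sum>a\<in>I. M a a)"

lemma mT_mmr: "mT (mmr I J K M N) = mmr K J I (mT N) (mT M)"
  by (intro ext) (auto simp: mT_def mmr_def mult.commute)
lemma mT_madd: "mT (madd M N) = madd (mT M) (mT N)" by (intro ext) (auto simp: mT_def madd_def)
lemma mT_msc: "mT (msc c M) = msc c (mT M)" by (intro ext) (auto simp: mT_def msc_def)
lemma mT_idm: "mT (idm I) = idm I" by (intro ext) (auto simp: mT_def idm_def)

lemma msupp_mmr_left: "finite I \<Longrightarrow> msupp I I M \<Longrightarrow> mmr I I K M N = mmr I I K M (mmr I I K (idm I) N)"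
  by (metis mmr_assoc mmr_idm_right msupp_mmr)

lemma peval_commute:
  assumes fin: "finite I" and sM: "msupp I I M" and sN: "msupp I I N" and c: "mm I M N = mm I N M"
  shows "mm I M (peval I p N) = mm I (peval I p N) M"
proof (induct p rule: pCons_induct)
  case 0 then show ?case by simp
next
  case (pCons a p)
  have "mm I M (peval I (pCons a p) N) = madd (msc a M) (mm I (mm I M N) (peval I p N))"
    by (simp add: peval_pCons mmr_madd_right mmr_msc_right mmr_idm_right fin sM mmr_assoc)
  also have "\<dots> = madd (msc a M) (mm I N (mm I M (peval I p N)))"
    by (simp add: c mmr_assoc)
  also have "\<dots> = madd (msc a M) (mm I N (mm I (peval I p N) M))"
    by (simp add: pCons)
  also have "\<dots> = mm I (peval I (pCons a p) N) M"
    by (simp add: peval_pCons mmr_madd_left mmr_msc_left mmr_idm_left fin sM mmr_assoc)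
  finally show ?case .
qed

lemma peval_sym:
  assumes fin: "finite I" and sM: "msupp I I M" and sy: "mT M = M"
  shows "mT (peval I p M) = peval I p M"
proof (induct p rule: pCons_induct)
  case 0 then show ?case by (simp add: mT_def zm_def)
next
  case (pCons a p)
  have "mT (peval I (pCons a p) M) = madd (msc a (idm I)) (mm I (peval I p M) M)"
    by (simp add: peval_pCons mT_madd mT_msc mT_idm mT_mmr pCons sy)
  also have "\<dots> = peval I (pCons a p) M"
    using peval_commute[OF fin sM sM refl, of p] by (simp add: peval_pCons)
  finally show ?case .
qed

lemma peval_intertwine:
  assumes fI: "finite I" and fJ: "finite J" and sB: "msupp J I B"
  shows "mmr J I I B (peval I g (mmr I J I A B)) = mmr J J I (peval J g (mmr J I J B A)) B"
proof (induct g rule: pCons_induct)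
  case 0 then show ?case by simp
next
  case (pCons a g)
  have "mmr J I I B (peval I (pCons a g) (mmr I J I A B))
      = madd (msc a B) (mmr J I I B (mm I (mmr I J I A B) (peval I g (mmr I J I A B))))"
    by (simp add: peval_pCons mmr_madd_right mmr_msc_right mmr_idm_right fI sB)
  also have "mmr J I I B (mm I (mmr I J I A B) (peval I g (mmr I J I A B)))
      = mmr J J I (mmr J I J B A) (mmr J I I B (peval I g (mmr I J I A B)))"
    by (simp add: mmr_assoc)
  also have "\<dots> = mmr J J I (mm J (mmr J I J B A) (peval J g (mmr J I J B A))) B"
    by (simp add: pCons mmr_assoc)
  also have "madd (msc a B) \<dots> = mmr J J I (peval J (pCons a g) (mmr J I J B A)) B"
    by (simp add: peval_pCons mmr_madd_left mmr_msc_left mmr_idm_left fJ sB)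
  finally show ?case .
qed

lemma mtr_mmr_swap: "mtr I (mmr I J I A B) = mtr J (mmr J I J B A)"
  unfolding mtr_def mmr_def by (simp add: sum.swap[of _ I J] mult.commute)
lemma mtr_madd: "mtr I (madd M N) = mtr I M + mtr I N" by (simp add: mtr_def madd_def sum.distrib)
lemma mtr_msc: "mtr I (msc c M) = c * mtr I M" by (simp add: mtr_def msc_def sum_distrib_left)
lemma mtr_idm: "mtr I (idm I) = real (card I)" by (simp add: mtr_def idm_def)

lemma trace_shift:
  assumes fI: "finite I" and fJ: "finite J" and sB: "msupp J I B"
  shows "mtr I (peval I f (mmr I J I A B)) = mtr J (peval J f (mmr J I J B A)) + poly f 0 * (real (card I) - real (card J))"
proof -
  obtain a g where f: "f = pCons a g" by (cases f) auto
  have "mtr I (mm I (mmr I J I A B) (peval I g (mmr I J I A B)))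
     = mtr I (mmr I J I A (mmr J I I B (peval I g (mmr I J I A B))))" by (simp add: mmr_assoc)
  also have "\<dots> = mtr J (mmr J I J (mmr J I I B (peval I g (mmr I J I A B))) A)" by (rule mtr_mmr_swap)
  also have "\<dots> = mtr J (mmr J I J (mmr J J I (peval J g (mmr J I J B A)) B) A)"
    by (simp add: peval_intertwine[OF fI fJ sB])
  also have "\<dots> = mtr J (mm J (peval J g (mmr J I J B A)) (mmr J I J B A))" by (simp add: mmr_assoc)
  also have "\<dots> = mtr J (mm J (mmr J I J B A) (peval J g (mmr J I J B A)))" by (rule mtr_mmr_swap)
  finally have *: "mtr I (mm I (mmr I J I A B) (peval I g (mmr I J I A B))) = mtr J (mm J (mmr J I J B A) (peval J g (mmr J I J B A)))" .
  show ?thesis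
    by (simp add: f peval_pCons mtr_madd mtr_msc mtr_idm * algebra_simps)
qed

lemma sym_sq_zero:
  assumes fI: "finite I" and sy: "mT P = P" and t: "mtr I (mm I P P) = 0" and a: "a \<in> I" and b: "b \<in> I"
  shows "P a b = 0"
proof -
  have sy': "P x y = P y x" for x y using sy unfolding mT_def by metis
  have "mtr I (mm I P P) = (\<Sum>x\<in>I. \<Sum>y\<in>I. (P x y)^2)"
    unfolding mtr_def mmr_def by (intro sum.cong refl) (auto simp: power2_eq_square sy')
  then have "(\<Sum>x\<in>I. \<Sum>y\<in>I. (P x y)^2) = 0" using t by simp
  then have "\<forall>x\<in>I. (\<Sum>y\<in>I. (P x y)^2) = 0"
    using fI by (subst (asm) sum_nonneg_eq_0_iff) (auto intro: sum_nonneg)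
  then have "(\<Sum>y\<in>I. (P a y)^2) = 0" using a by blast
  then have "(P a b)^2 = 0" using fI b by (subst (asm) sum_nonneg_eq_0_iff) auto
  then show ?thesis by simp
qed

lemma peval_lin: "finite I \<Longrightarrow> msupp I I M \<Longrightarrow> peval I [:c,1:] M = madd M (msc c (idm I))"
  by (simp add: peval_pCons peval_const mmr_idm_right madd_comm)

lemma peval_shift:
  assumes fI: "finite I" and sM: "msupp I I M"
  shows "peval I f (madd M (msc c (idm I))) = peval I (pcompose f [:c,1:]) M"
proof (induct f rule: pCons_induct)
  case 0 then show ?case by simp
next
  case (pCons a p)
  have "peval I (pCons a p \<circ>\<^sub>p [:c, 1:]) M = madd (msc a (idm I))
      (mm I (madd M (msc c (idm I))) (peval I (p \<circ>\<^sub>p [:c, 1:]) M))"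
    by (simp only: pcompose_pCons peval_add peval_const peval_mult[OF fI] peval_lin[OF fI sM])
  also have "\<dots> = peval I (pCons a p) (madd M (msc c (idm I)))"
    by (simp add: peval_pCons pCons)
  finally show ?case ..
qed

lemma peval_singleton: "peval {a} f M a a = poly f (M a a)"
  by (induct f rule: pCons_induct) (auto simp: peval_pCons madd_def msc_def idm_def mmr_def zm_def)

lemma mtr_singleton: "mtr {a} M = M a a" by (simp add: mtr_def)


definition lv :: "nat \<Rightarrow> nat \<Rightarrow> nat set set" where
  "lv v k = {A. A \<subseteq> {1..v} \<and> card A = k}"

definition incr :: "nat set set \<Rightarrow> nat set set \<Rightarrow> nat set rmat" where
  "incr I K = (\<lambda>a b. if a \<in> I \<and> b \<in> K \<and> a \<subseteq> b then 1 else 0)"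

definition Bk :: "nat \<Rightarrow> nat \<Rightarrow> nat set rmat" where "Bk v k = incr (lv v k) (lv v (Suc k))"

definition Xk :: "nat \<Rightarrow> nat \<Rightarrow> nat set rmat" where
  "Xk v k = mmr (lv v k) (lv v (Suc k)) (lv v k) (Bk v k) (mT (Bk v k))"
definition Yk :: "nat \<Rightarrow> nat \<Rightarrow> nat set rmat" where
  "Yk v k = mmr (lv v (Suc k)) (lv v k) (lv v (Suc k)) (mT (Bk v k)) (Bk v k)"

lemma finite_lv[simp]: "finite (lv v k)"
  unfolding lv_def by (rule finite_subset[of _ "Pow {1..v}"]) auto

lemma card_lv: "card (lv v k) = v choose k"
  unfolding lv_def using n_subsets[of "{1..v}" k] by simp

lemma msupp_Bk[simp]: "msupp (lv v k) (lv v (Suc k)) (Bk v k)"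
  by (auto simp: msupp_def Bk_def incr_def)

lemma sum_ind: "finite A \<Longrightarrow> (\<Sum>x\<in>A. if P x then (1::real) else 0) = real (card {x\<in>A. P x})"
  by (simp add: sum.inter_filter[symmetric])

lemma card_supersets:
  assumes fS: "finite S" and AS: "A \<subseteq> S"
  shows "card {C. A \<subseteq> C \<and> C \<subseteq> S \<and> card C = card A + j} = card (S - A) choose j"
proof -
  have fA: "finite A" using fS AS finite_subset by blast
  have "bij_betw (\<lambda>D. A \<union> D) {D. D \<subseteq> S - A \<and> card D = j} {C. A \<subseteq> C \<and> C \<subseteq> S \<and> card C = card A + j}"
  proof (rule bij_betw_byWitness[where f' = "\<lambda>C. C - A"])
    show "\<forall>D\<in>{D. D \<subseteq> S - A \<and> card D = j}. A \<union> D - A = D" by auto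
    show "\<forall>C\<in>{C. A \<subseteq> C \<and> C \<subseteq> S \<and> card C = card A + j}. A \<union> (C - A) = C" by auto
    show "(\<lambda>D. A \<union> D) ` {D. D \<subseteq> S - A \<and> card D = j} \<subseteq> {C. A \<subseteq> C \<and> C \<subseteq> S \<and> card C = card A + j}"
    proof (rule subsetI)
      fix C assume "C \<in> (\<lambda>D. A \<union> D) ` {D. D \<subseteq> S - A \<and> card D = j}"
      then obtain D where D: "D \<subseteq> S - A" "card D = j" and C: "C = A \<union> D" by blast
      have "finite D" using fS D(1) finite_subset by blast
      then have "card (A \<union> D) = card A + card D" using D fA by (subst card_Un_disjoint) auto
      then show "C \<in> {C. A \<subseteq> C \<and> C \<subseteq> S \<and> card C = card A + j}" using C D AS by auto
    qed
    show "(\<lambda>C. C - A) ` {C. A \<subseteq> C \<and> C \<subseteq> S \<and> card C = card A + j} \<subseteq> {D. D \<subseteq> S - A \<and> card D = j}"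
    proof (rule subsetI)
      fix D assume "D \<in> (\<lambda>C. C - A) ` {C. A \<subseteq> C \<and> C \<subseteq> S \<and> card C = card A + j}"
      then obtain C where C: "A \<subseteq> C" "C \<subseteq> S" "card C = card A + j" and D: "D = C - A" by blast
      have "card (C - A) = card C - card A" using fA C(1) by (simp add: card_Diff_subset)
      then show "D \<in> {D. D \<subseteq> S - A \<and> card D = j}" using C D by auto
    qed
  qed
  note bij_betw_same_card[OF this, symmetric]
  then have "card {C. A \<subseteq> C \<and> C \<subseteq> S \<and> card C = card A + j} = card {D. D \<subseteq> S - A \<and> card D = j}" .
  also have "\<dots> = card (S - A) choose j" using fS by (simp add: n_subsets)
  finally show ?thesis .
qed

lemma Xk_ent: assumes "A \<in> lv v m" "B \<in> lv v m"
  shows "Xk v m A B = real (card {C\<in>lv v (Suc m). A \<union> B \<subseteq> C})"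
proof -
  have "Xk v m A B = (\<Sum>C\<in>lv v (Suc m). if A \<union> B \<subseteq> C then 1 else 0)"
    using assms unfolding Xk_def mmr_def Bk_def incr_def mT_def by (auto intro!: sum.cong)
  then show ?thesis by (simp add: sum_ind)
qed

lemma Yk_ent: assumes "A \<in> lv v (Suc k)" "B \<in> lv v (Suc k)"
  shows "Yk v k A B = real (card {C\<in>lv v k. C \<subseteq> A \<inter> B})"
proof -
  have "Yk v k A B = (\<Sum>C\<in>lv v k. if C \<subseteq> A \<inter> B then 1 else 0)"
    using assms unfolding Yk_def mmr_def Bk_def incr_def mT_def by (auto intro!: sum.cong)
  then show ?thesis by (simp add: sum_ind)
qed

lemma count_up: assumes U: "U \<subseteq> {1..v}" and c: "card U \<le> r"
  shows "card {C\<in>lv v r. U \<subseteq> C} = (v - card U) choose (r - card U)"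
proof -
  have "{C\<in>lv v r. U \<subseteq> C} = {C. U \<subseteq> C \<and> C \<subseteq> {1..v} \<and> card C = card U + (r - card U)}"
    using c by (auto simp: lv_def)
  also have "card \<dots> = card ({1..v} - U) choose (r - card U)"
    by (rule card_supersets) (use U in auto)
  also have "card ({1..v} - U) = v - card U"
    using U by (subst card_Diff_subset) (auto intro: finite_subset)
  finally show ?thesis .
qed

lemma count_up_empty: assumes U: "U \<subseteq> {1..v}" and c: "card U > r"
  shows "{C\<in>lv v r. U \<subseteq> C} = {}"
proof -
  { fix C assume "C \<in> lv v r" "U \<subseteq> C"
    then have "card U \<le> card C" by (intro card_mono) (auto simp: lv_def intro: finite_subset)
    with c \<open>C \<in> lv v r\<close> have False by (auto simp: lv_def) }
  then show ?thesis by blast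
qed

lemma count_down: assumes W: "W \<subseteq> {1..v}"
  shows "card {C\<in>lv v k. C \<subseteq> W} = card W choose k"
proof -
  have "{C\<in>lv v k. C \<subseteq> W} = {C. C \<subseteq> W \<and> card C = k}" using W by (auto simp: lv_def)
  then show ?thesis using W by (simp add: n_subsets finite_subset)
qed

lemma XY_rel: assumes A: "A \<in> lv v (Suc k)" and B: "B \<in> lv v (Suc k)"
  shows "Xk v (Suc k) A B = Yk v k A B + (if A = B then real v - 2 * real (Suc k) else 0)"
proof -
  let ?m = "Suc k"
  have Av: "A \<subseteq> {1..v}" "card A = ?m" and Bv: "B \<subseteq> {1..v}" "card B = ?m" using A B by (auto simp: lv_def)
  have fA: "finite A" "finite B" using Av Bv by (auto intro: finite_subset)
  have mv: "?m \<le> v" using Av card_mono[of "{1..v}" A] by auto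
  show ?thesis
  proof (cases "A = B")
    case True
    have "card {C\<in>lv v (Suc ?m). A \<union> B \<subseteq> C} = (v - ?m) choose 1"
      using count_up[of "A \<union> B" v "Suc ?m"] Av True by simp
    moreover have "card {C\<in>lv v k. C \<subseteq> A \<inter> B} = ?m choose k"
      using count_down[of "A \<inter> B" v k] Av True by simp
    ultimately show ?thesis using A B True mv by (simp add: Xk_ent Yk_ent of_nat_diff)
  next
    case False
    have cUI: "card (A \<union> B) + card (A \<inter> B) = 2 * ?m" using card_Un_Int[OF fA] Av Bv by simp
    have "A \<subset> A \<union> B"
    proof
      show "A \<subseteq> A \<union> B" by auto
      show "A \<noteq> A \<union> B"
      proof
        assume "A = A \<union> B"
        then have "B \<subseteq> A" by auto
        then have "B = A" using fA Av Bv card_subset_eq by metis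
        with False show False by simp
      qed
    qed
    then have cU: "card (A \<union> B) > ?m" using fA Av psubset_card_mono[of "A \<union> B" A] by auto
    have Uv: "A \<union> B \<subseteq> {1..v}" "A \<inter> B \<subseteq> {1..v}" using Av Bv by auto
    show ?thesis
    proof (cases "card (A \<union> B) = Suc ?m")
      case True
      then have "card (A \<inter> B) = k" using cUI by simp
      then show ?thesis using True False A B count_up[OF Uv(1), of "Suc ?m"] count_down[OF Uv(2), of k]
        by (simp add: Xk_ent Yk_ent)
    next
      case F2: False
      then have c1: "card (A \<union> B) > Suc ?m" using cU by simp
      then have "card (A \<inter> B) < k" using cUI by simp
      then have e2: "card {C\<in>lv v k. C \<subseteq> A \<inter> B} = 0" using count_down[OF Uv(2), of k] by simp
      have e1: "card {C\<in>lv v (Suc ?m). A \<union> B \<subseteq> C} = 0" using count_up_empty[OF Uv(1) c1] by (simp only: card.empty)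
      show ?thesis using False A B by (simp only: Xk_ent Yk_ent e1 e2) simp
    qed
  qed
qed

definition specv :: "nat \<Rightarrow> nat \<Rightarrow> nat \<Rightarrow> real" where
  "specv v k j = (real k + 1 - real j) * (real v - real k - real j)"
definition mlt :: "nat \<Rightarrow> nat \<Rightarrow> real" where
  "mlt v j = real (v choose j) - (if j = 0 then 0 else real (v choose (j - 1)))"

lemma msupp_Xk[simp]: "msupp (lv v k) (lv v k) (Xk v k)" by (simp add: Xk_def)
lemma msupp_Yk[simp]: "msupp (lv v (Suc k)) (lv v (Suc k)) (Yk v k)" by (simp add: Yk_def)

lemma XY_mat: "Xk v (Suc k) = madd (Yk v k) (msc (real v - 2 * real (Suc k)) (idm (lv v (Suc k))))"
proof (intro ext)
  fix A B
  show "Xk v (Suc k) A B = madd (Yk v k) (msc (real v - 2 * real (Suc k)) (idm (lv v (Suc k)))) A B"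
  proof (cases "A \<in> lv v (Suc k) \<and> B \<in> lv v (Suc k)")
    case True then show ?thesis by (simp add: XY_rel madd_def msc_def idm_def)
  next
    case False then show ?thesis by (auto simp: Xk_def Yk_def mmr_def madd_def msc_def idm_def)
  qed
qed

lemma lv0: "lv v 0 = {{}}"
  unfolding lv_def by (auto, metis card_0_eq empty_iff finite_atLeastAtMost finite_subset)

lemma trace_formula:
  "mtr (lv v k) (peval (lv v k) f (Xk v k)) = (\<Sum>j\<le>k. poly f (specv v k j) * mlt v j)"
proof (induct k arbitrary: f)
  case 0
  have "Xk v 0 {} {} = real v"
    using Xk_ent[of "{}" v 0 "{}"] card_lv[of v 1] by (simp add: lv0)
  then show ?case by (simp add: lv0 mtr_singleton peval_singleton specv_def mlt_def)
next
  case (Suc k)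
  let ?c = "real v - 2 * real (Suc k)"
  let ?g = "pcompose f [:?c,1:]"
  have "mtr (lv v (Suc k)) (peval (lv v (Suc k)) f (Xk v (Suc k)))
      = mtr (lv v (Suc k)) (peval (lv v (Suc k)) ?g (Yk v k))"
    by (simp add: XY_mat peval_shift)
  also have "\<dots> = mtr (lv v k) (peval (lv v k) ?g (Xk v k)) + poly ?g 0 * (real (card (lv v (Suc k))) - real (card (lv v k)))"
    unfolding Yk_def Xk_def by (rule trace_shift) auto
  also have "\<dots> = (\<Sum>j\<le>k. poly ?g (specv v k j) * mlt v j) + poly f ?c * mlt v (Suc k)"
    by (simp add: Suc card_lv mlt_def poly_pcompose)
  also have "\<dots> = (\<Sum>j\<le>Suc k. poly f (specv v (Suc k) j) * mlt v j)"
  proof -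
    have "poly ?g (specv v k j) = poly f (specv v (Suc k) j)" for j
      by (simp add: poly_pcompose specv_def algebra_simps)
    moreover have "specv v (Suc k) (Suc k) = ?c" by (simp add: specv_def)
    ultimately show ?thesis by simp
  qed
  finally show ?case .
qed


lemma interp:
  fixes x y :: "nat \<Rightarrow> real"
  assumes d: "\<And>i j. i \<le> n \<Longrightarrow> j \<le> n \<Longrightarrow> i \<noteq> j \<Longrightarrow> x i \<noteq> x j"
  shows "\<exists>p. \<forall>k\<le>n. poly p (x k) = y k"
proof -
  define den where "den j = (\<Prod>i\<in>{..n}-{j}. x j - x i)" for j
  define p where "p = (\<Sum>j\<le>n. smult (y j / den j) (\<Prod>i\<in>{..n}-{j}. [:- x i, 1:]))"
  have "poly p (x k) = y k" if k: "k \<le> n" for k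
  proof -
    have "poly p (x k) = (\<Sum>j\<le>n. y j / den j * (\<Prod>i\<in>{..n}-{j}. x k - x i))"
      by (simp add: p_def poly_sum poly_prod)
    also have "\<dots> = (\<Sum>j\<in>{k}. y j / den j * (\<Prod>i\<in>{..n}-{j}. x k - x i))"
    proof (rule sum.mono_neutral_right)
      show "\<forall>j\<in>{..n} - {k}. y j / den j * (\<Prod>i\<in>{..n} - {j}. x k - x i) = 0"
      proof
        fix j assume "j \<in> {..n} - {k}"
        then have "k \<in> {..n} - {j}" using k by auto
        then have "(\<Prod>i\<in>{..n} - {j}. x k - x i) = 0"
          by (intro prod_zero) auto
        then show "y j / den j * (\<Prod>i\<in>{..n} - {j}. x k - x i) = 0" by simp
      qed
    qed (use k in auto)
    also have "\<dots> = y k"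
    proof -
      have "den k \<noteq> 0" unfolding den_def using d k by (subst prod_zero_iff) auto
      then show ?thesis by (simp add: den_def)
    qed
    finally show ?thesis .
  qed
  then show ?thesis by blast
qed

lemma mlt_telescope: "(\<Sum>j\<le>k. mlt v j) = real (v choose k)"
  by (induct k) (auto simp: mlt_def)

lemma weighted_sum: "(\<Sum>j\<le>k. (real k + 1 - real j) * mlt v j) = (\<Sum>j\<le>k. real (v choose j))"
proof (induct k)
  case 0 then show ?case by (simp add: mlt_def)
next
  case (Suc k)
  have "(\<Sum>j\<le>Suc k. (real (Suc k) + 1 - real j) * mlt v j)
      = (\<Sum>j\<le>Suc k. (real k + 1 - real j) * mlt v j) + (\<Sum>j\<le>Suc k. mlt v j)"
    by (simp add: sum.distrib[symmetric] algebra_simps)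
  also have "(\<Sum>j\<le>Suc k. (real k + 1 - real j) * mlt v j) = (\<Sum>j\<le>k. (real k + 1 - real j) * mlt v j)"
    by simp
  finally show ?case by (simp only: Suc.hyps mlt_telescope sum.atMost_Suc[of _ k]) (simp add: mlt_def)
qed

lemma weighted_sum_main: "(\<Sum>j\<le>n. (real n + 1 - real j) * mlt (2*n+1) j) = 2 ^ (2*n)"
proof -
  have e: "(\<Sum>j\<le>n. (2*n+1) choose j) = 2^(2*n)" by (rule binomial_r_part_sum)
  have "(\<Sum>j\<le>n. real ((2*n+1) choose j)) = 2 ^ (2*n)"
    by (simp only: of_nat_sum[symmetric] e of_nat_power of_nat_numeral)
  then show ?thesis by (simp add: weighted_sum)
qed

definition Iv :: "nat \<Rightarrow> nat set set" where "Iv n = lv (2*n+1) n"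
lemma finite_Iv[simp]: "finite (Iv n)" by (simp add: Iv_def)

definition Tm :: "nat \<Rightarrow> nat set rmat" where
  "Tm n = (\<lambda>A B. if A \<in> Iv n \<and> B \<in> Iv n \<and> A \<inter> B = {} then 1 else 0)"

lemma msupp_Tm[simp]: "msupp (Iv n) (Iv n) (Tm n)" by (auto simp: msupp_def Tm_def)
lemma sym_Tm: "mT (Tm n) = Tm n" by (intro ext) (auto simp: mT_def Tm_def)

lemma compl_bij: "bij_betw (\<lambda>C. {1..2*n+1} - C) (Iv n) (lv (2*n+1) (Suc n))"
  unfolding Iv_def
proof (rule bij_betw_byWitness[where f' = "\<lambda>C. {1..2*n+1} - C"])
  show "\<forall>a\<in>lv (2*n+1) n. {1..2*n+1} - ({1..2*n+1} - a) = a" by (auto simp: lv_def)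
  show "\<forall>a\<in>lv (2*n+1) (Suc n). {1..2*n+1} - ({1..2*n+1} - a) = a" by (auto simp: lv_def)
  show "(\<lambda>C. {1..2*n+1} - C) ` lv (2*n+1) n \<subseteq> lv (2*n+1) (Suc n)"
  proof
    fix D assume "D \<in> (\<lambda>C. {1..2*n+1} - C) ` lv (2*n+1) n"
    then obtain C where C: "C \<subseteq> {1..2*n+1}" "card C = n" and D: "D = {1..2*n+1} - C" by (auto simp: lv_def)
    have "card D = 2*n+1 - n" unfolding D using C by (subst card_Diff_subset) (auto intro: finite_subset)
    then show "D \<in> lv (2*n+1) (Suc n)" using D by (auto simp: lv_def)
  qed
  show "(\<lambda>C. {1..2*n+1} - C) ` lv (2*n+1) (Suc n) \<subseteq> lv (2*n+1) n"
  proof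
    fix D assume "D \<in> (\<lambda>C. {1..2*n+1} - C) ` lv (2*n+1) (Suc n)"
    then obtain C where C: "C \<subseteq> {1..2*n+1}" "card C = Suc n" and D: "D = {1..2*n+1} - C" by (auto simp: lv_def)
    have "card D = 2*n+1 - Suc n" unfolding D using C by (subst card_Diff_subset) (auto intro: finite_subset)
    then show "D \<in> lv (2*n+1) n" using D by (auto simp: lv_def)
  qed
qed

lemma TT_X: "mm (Iv n) (Tm n) (Tm n) = Xk (2*n+1) n"
proof (intro ext)
  fix A B
  let ?I = "Iv n"
  show "mm ?I (Tm n) (Tm n) A B = Xk (2*n+1) n A B"
  proof (cases "A \<in> ?I \<and> B \<in> ?I")
    case True
    then have AB: "A \<subseteq> {1..2*n+1}" "B \<subseteq> {1..2*n+1}" by (auto simp: lv_def Iv_def)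
    have "Xk (2*n+1) n A B = (\<Sum>C\<in>lv (2*n+1) (Suc n). (if A \<subseteq> C then 1 else 0) * (if B \<subseteq> C then 1 else 0))"
      using True unfolding Xk_def mmr_def Bk_def incr_def mT_def Iv_def by (auto intro!: sum.cong)
    also have "\<dots> = (\<Sum>C\<in>?I. (if A \<subseteq> {1..2*n+1} - C then 1 else 0) * (if B \<subseteq> {1..2*n+1} - C then 1 else 0))"
      by (rule sum.reindex_bij_betw[OF compl_bij, symmetric])
    also have "\<dots> = mm ?I (Tm n) (Tm n) A B"
      using True AB unfolding mmr_def Tm_def by (auto intro!: sum.cong)
    finally show ?thesis by simp
  next
    case False then show ?thesis by (auto simp: Xk_def mmr_def Iv_def)
  qed
qed

definition rho :: "nat \<Rightarrow> nat \<Rightarrow> real" where "rho n j = real n + 1 - real j"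

lemma specv_n: "j \<le> n \<Longrightarrow> specv (2*n+1) n j = (rho n j)^2"
  by (simp add: specv_def rho_def power2_eq_square algebra_simps)

lemma rho_pos: "j \<le> n \<Longrightarrow> rho n j > 0" by (simp add: rho_def)

lemma rho_distinct: "i \<le> n \<Longrightarrow> j \<le> n \<Longrightarrow> i \<noteq> j \<Longrightarrow> (rho n i)^2 \<noteq> (rho n j)^2"
proof
  assume ij: "i \<le> n" "j \<le> n" "i \<noteq> j" and e: "(rho n i)^2 = (rho n j)^2"
  have "rho n i = rho n j" using e rho_pos[OF ij(1)] rho_pos[OF ij(2)] by (simp add: power2_eq_iff)
  then show False using ij by (simp add: rho_def)
qed

definition Xn :: "nat \<Rightarrow> nat set rmat" where "Xn n = mm (Iv n) (Tm n) (Tm n)"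

lemma msupp_Xn[simp]: "msupp (Iv n) (Iv n) (Xn n)" by (simp add: Xn_def)
lemma sym_Xn: "mT (Xn n) = Xn n" by (simp add: Xn_def mT_mmr sym_Tm)

lemma trace_n: "mtr (Iv n) (peval (Iv n) f (Xn n)) = (\<Sum>j\<le>n. poly f ((rho n j)^2) * mlt (2*n+1) j)"
  unfolding Xn_def TT_X unfolding Iv_def trace_formula by (intro sum.cong refl) (metis atMost_iff specv_n)

lemma vanish:
  assumes "\<And>j. j \<le> n \<Longrightarrow> poly f ((rho n j)^2) = 0"
  shows "peval (Iv n) f (Xn n) = zm"
proof (intro ext)
  let ?I = "Iv n"
  let ?P = "peval ?I f (Xn n)"
  fix a b
  have sy: "mT ?P = ?P" by (rule peval_sym) (auto simp: sym_Xn)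
  have "mtr ?I (mm ?I ?P ?P) = mtr ?I (peval ?I (f * f) (Xn n))" by (simp add: peval_mult)
  also have "\<dots> = 0" using assms by (simp add: trace_n)
  finally have t: "mtr ?I (mm ?I ?P ?P) = 0" .
  show "?P a b = zm a b"
  proof (cases "a \<in> ?I \<and> b \<in> ?I")
    case True then show ?thesis using sym_sq_zero[OF finite_Iv sy t] by (simp add: zm_def)
  next
    case False then show ?thesis using msupp_peval[of ?I f "Xn n"] by (auto simp: msupp_def zm_def)
  qed
qed

lemma agree:
  assumes "\<And>j. j \<le> n \<Longrightarrow> poly f ((rho n j)^2) = poly g ((rho n j)^2)"
  shows "peval (Iv n) f (Xn n) = peval (Iv n) g (Xn n)"
proof -
  have "peval (Iv n) (f - g) (Xn n) = zm" by (rule vanish) (use assms in simp)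
  then have "madd (peval (Iv n) f (Xn n)) (msc (-1) (peval (Iv n) g (Xn n))) = zm"
    by (simp add: peval_minus)
  then have "\<And>a b. peval (Iv n) f (Xn n) a b + (-1) * peval (Iv n) g (Xn n) a b = 0"
    unfolding madd_def msc_def zm_def by meson
  then show ?thesis by (intro ext) (simp add: algebra_simps)
qed

definition hP :: "nat \<Rightarrow> real poly" where
  "hP n = (SOME p. \<forall>k\<le>n. poly p ((rho n k)^2) = 1 / rho n k)"
definition zP :: "nat \<Rightarrow> real poly" where
  "zP n = (SOME p. \<forall>k\<le>n. poly p ((rho n k)^2) = sqrt (rho n k))"

lemma hP_val: "k \<le> n \<Longrightarrow> poly (hP n) ((rho n k)^2) = 1 / rho n k"
proof -
  have "\<exists>p. \<forall>k\<le>n. poly p ((rho n k)^2) = 1 / rho n k"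
    by (rule interp) (use rho_distinct in auto)
  from someI_ex[OF this] show "k \<le> n \<Longrightarrow> ?thesis" unfolding hP_def by blast
qed

lemma zP_val: "k \<le> n \<Longrightarrow> poly (zP n) ((rho n k)^2) = sqrt (rho n k)"
proof -
  have "\<exists>p. \<forall>k\<le>n. poly p ((rho n k)^2) = sqrt (rho n k)"
    by (rule interp) (use rho_distinct in auto)
  from someI_ex[OF this] show "k \<le> n \<Longrightarrow> ?thesis" unfolding zP_def by blast
qed

abbreviation pe :: "nat \<Rightarrow> real poly \<Rightarrow> nat set rmat" where "pe n f \<equiv> peval (Iv n) f (Xn n)"

lemma pe_mult: "mm (Iv n) (pe n f) (pe n g) = pe n (f * g)" by (simp add: peval_mult)
lemma pe_X: "pe n [:0,1:] = Xn n" by (simp add: peval_X)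
lemma pe_Xmult: "mm (Iv n) (Xn n) (pe n g) = pe n ([:0,1:] * g)"
  unfolding peval_mult[OF finite_Iv] peval_X[OF finite_Iv msupp_Xn] ..
lemma pe_one: "pe n 1 = idm (Iv n)" by (simp add: peval_one)
lemma sym_pe: "mT (pe n f) = pe n f" by (rule peval_sym) (auto simp: sym_Xn)
lemma T_comm_pe: "mm (Iv n) (Tm n) (pe n f) = mm (Iv n) (pe n f) (Tm n)"
proof (rule peval_commute)
  show "mm (Iv n) (Tm n) (Xn n) = mm (Iv n) (Xn n) (Tm n)" by (simp add: Xn_def mmr_assoc)
qed auto

definition Hm where "Hm n = pe n (hP n)"
definition Zm where "Zm n = pe n (zP n)"
definition Sm where "Sm n = mm (Iv n) (Tm n) (Hm n)"
definition Wm where "Wm n = mm (Iv n) (Sm n) (Zm n)"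

lemma msupp_Sm[simp]: "msupp (Iv n) (Iv n) (Sm n)" by (simp add: Sm_def)
lemma msupp_Zm[simp]: "msupp (Iv n) (Iv n) (Zm n)" by (simp add: Zm_def)
lemma sym_Zm: "mT (Zm n) = Zm n" by (simp add: Zm_def sym_pe)

lemma sym_Sm: "mT (Sm n) = Sm n"
  unfolding Sm_def mT_mmr sym_Tm Hm_def sym_pe using T_comm_pe[of n "hP n"] by simp

lemma SS: "mm (Iv n) (Sm n) (Sm n) = idm (Iv n)"
proof -
  let ?I = "Iv n" and ?T = "Tm n" and ?H = "Hm n"
  have "mm ?I (Sm n) (Sm n) = mm ?I ?T (mm ?I (mm ?I ?H ?T) ?H)" by (simp add: Sm_def mmr_assoc)
  also have "\<dots> = mm ?I (mm ?I ?T ?T) (mm ?I ?H ?H)"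
    by (simp add: Hm_def T_comm_pe[symmetric] mmr_assoc)
  also have "\<dots> = pe n ([:0,1:] * (hP n * hP n))" by (simp only: Xn_def[symmetric] pe_Xmult pe_mult Hm_def)
  also have "\<dots> = pe n 1"
  proof (rule agree)
    fix j assume j: "j \<le> n"
    then have "rho n j \<noteq> 0" using rho_pos by (metis less_irrefl)
    then show "poly ([:0,1:] * (hP n * hP n)) ((rho n j)^2) = poly 1 ((rho n j)^2)"
      by (simp only: poly_mult hP_val[OF j]) (simp add: power2_eq_square)
  qed
  finally show ?thesis by (simp add: pe_one)
qed

lemma ZW: "mm (Iv n) (Zm n) (Wm n) = Tm n"
proof -
  let ?I = "Iv n" and ?T = "Tm n" and ?H = "Hm n" and ?Z = "Zm n"
  have "mm ?I ?Z (Wm n) = mm ?I (mm ?I ?Z ?T) (mm ?I ?H ?Z)" by (simp add: Wm_def Sm_def mmr_assoc)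
  also have "\<dots> = mm ?I ?T (mm ?I ?Z (mm ?I ?H ?Z))" by (simp add: Zm_def T_comm_pe[symmetric] mmr_assoc)
  also have "\<dots> = mm ?I ?T (pe n (zP n * (hP n * zP n)))" by (simp add: Zm_def Hm_def pe_mult)
  also have "pe n (zP n * (hP n * zP n)) = pe n 1"
  proof (rule agree)
    fix j assume j: "j \<le> n"
    then have "rho n j > 0" using rho_pos by blast
    then show "poly (zP n * (hP n * zP n)) ((rho n j)^2) = poly 1 ((rho n j)^2)"
      using j by (simp add: hP_val zP_val)
  qed
  finally show ?thesis by (simp add: pe_one mmr_idm_right)
qed

lemma WW: "mm (Iv n) (mT (Wm n)) (Wm n) = mm (Iv n) (Zm n) (Zm n)"
proof -
  let ?I = "Iv n"
  have "mm ?I (mT (Wm n)) (Wm n) = mm ?I (Zm n) (mm ?I (mm ?I (Sm n) (Sm n)) (Zm n))"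
    by (simp add: Wm_def mT_mmr sym_Zm sym_Sm mmr_assoc)
  then show ?thesis by (simp add: SS mmr_idm_left)
qed

lemma mtr_ZZ: "mtr (Iv n) (mm (Iv n) (Zm n) (Zm n)) = 2 ^ (2*n)"
proof -
  have "mtr (Iv n) (mm (Iv n) (Zm n) (Zm n)) = (\<Sum>j\<le>n. poly (zP n * zP n) ((rho n j)^2) * mlt (2*n+1) j)"
    by (simp add: Zm_def pe_mult trace_n)
  also have "\<dots> = (\<Sum>j\<le>n. (real n + 1 - real j) * mlt (2*n+1) j)"
  proof (intro sum.cong refl)
    fix j assume "j \<in> {..n}"
    then have j: "j \<le> n" by simp
    then have "rho n j > 0" using rho_pos by blast
    then have sq: "sqrt (rho n j) * sqrt (rho n j) = rho n j" by simp
    have "poly (zP n * zP n) ((rho n j)^2) = sqrt (rho n j) * sqrt (rho n j)"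
      by (simp only: poly_mult zP_val[OF j])
    then have "poly (zP n * zP n) ((rho n j)^2) = rho n j" using sq by simp
    then show "poly (zP n * zP n) ((rho n j)^2) * mlt (2*n+1) j = (real n + 1 - real j) * mlt (2*n+1) j"
      by (simp add: rho_def)
  qed
  also have "\<dots> = 2 ^ (2*n)" by (rule weighted_sum_main)
  finally show ?thesis .
qed

lemma mtr_TS: "mtr (Iv n) (mm (Iv n) (Tm n) (Sm n)) = 2 ^ (2*n)"
proof -
  have "mm (Iv n) (Tm n) (Sm n) = pe n ([:0,1:] * hP n)"
    by (simp only: Sm_def Hm_def mmr_assoc[symmetric] Xn_def[symmetric] pe_Xmult)
  then have "mtr (Iv n) (mm (Iv n) (Tm n) (Sm n)) = (\<Sum>j\<le>n. poly ([:0,1:] * hP n) ((rho n j)^2) * mlt (2*n+1) j)"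
    by (simp add: trace_n)
  also have "\<dots> = (\<Sum>j\<le>n. (real n + 1 - real j) * mlt (2*n+1) j)"
  proof (intro sum.cong refl)
    fix j assume "j \<in> {..n}"
    then have j: "j \<le> n" by simp
    then have "rho n j > 0" using rho_pos by blast
    then have "poly ([:0,1:] * hP n) ((rho n j)^2) = rho n j"
      by (simp only: poly_mult hP_val[OF j]) (simp add: power2_eq_square)
    then show "poly ([:0,1:] * hP n) ((rho n j)^2) * mlt (2*n+1) j = (real n + 1 - real j) * mlt (2*n+1) j"
      by (simp add: rho_def)
  qed
  also have "\<dots> = 2 ^ (2*n)" by (rule weighted_sum_main)
  finally show ?thesis .
qed


lemma vnorm_L2: "vnorm I x = L2_set (\<lambda>i. cmod (x i)) I"
  by (simp add: vnorm_def L2_set_def)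

lemma vnorm_nonneg: "vnorm I x \<ge> 0" by (simp add: vnorm_L2)

lemma vnorm_sq: "(vnorm I x)^2 = (\<Sum>i\<in>I. (cmod (x i))^2)"
  unfolding vnorm_def by (simp add: sum_nonneg)

lemma row_bound: "cmod (\<Sum>j\<in>I. R i j * x j) \<le> L2_set (\<lambda>j. cmod (R i j)) I * vnorm I x"
proof -
  have "cmod (\<Sum>j\<in>I. R i j * x j) \<le> (\<Sum>j\<in>I. \<bar>cmod (R i j)\<bar> * \<bar>cmod (x j)\<bar>)"
    by (rule order_trans[OF norm_sum]) (simp add: norm_mult)
  also have "\<dots> \<le> L2_set (\<lambda>j. cmod (R i j)) I * vnorm I x"
    unfolding vnorm_L2 by (rule L2_set_mult_ineq)
  finally show ?thesis .
qed

definition Kb :: "'a set \<Rightarrow> ('a \<Rightarrow> 'a \<Rightarrow> complex) \<Rightarrow> real" where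
  "Kb I R = L2_set (\<lambda>i. L2_set (\<lambda>j. cmod (R i j)) I) I"

lemma mat_apply_Kb: "vnorm I (mat_apply I R x) \<le> Kb I R * vnorm I x"
proof -
  have "vnorm I (mat_apply I R x) = L2_set (\<lambda>i. cmod (\<Sum>j\<in>I. R i j * x j)) I"
    by (simp add: vnorm_L2 mat_apply_def)
  also have "\<dots> \<le> L2_set (\<lambda>i. L2_set (\<lambda>j. cmod (R i j)) I * vnorm I x) I"
    by (rule L2_set_mono) (auto simp: row_bound)
  also have "\<dots> = Kb I R * vnorm I x"
    unfolding Kb_def by (simp add: L2_set_left_distrib vnorm_nonneg)
  finally show ?thesis .
qed

lemma opnorm_bdd: "bdd_above {vnorm I (mat_apply I R x) | x. vnorm I x \<le> 1}"
proof (rule bdd_aboveI[of _ "Kb I R"])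
  fix y assume "y \<in> {vnorm I (mat_apply I R x) | x. vnorm I x \<le> 1}"
  then obtain x where y: "y = vnorm I (mat_apply I R x)" and x: "vnorm I x \<le> 1" by blast
  have "Kb I R \<ge> 0" by (simp add: Kb_def)
  then have "Kb I R * vnorm I x \<le> Kb I R" using x by (simp add: mult_left_le)
  then show "y \<le> Kb I R" using y mat_apply_Kb[of I R x] by linarith
qed

lemma vnorm_zero: "vnorm I (\<lambda>i. 0) = 0" by (simp add: vnorm_def)

lemma opnorm_upper: "vnorm I x \<le> 1 \<Longrightarrow> vnorm I (mat_apply I R x) \<le> opnorm I R"
  unfolding opnorm_def by (rule cSup_upper) (auto intro: opnorm_bdd)

lemma opnorm_nonneg: "opnorm I R \<ge> 0"
  using opnorm_upper[of I "\<lambda>i. 0" R] vnorm_nonneg[of I "mat_apply I R (\<lambda>i. 0)"]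
  by (simp add: vnorm_zero)

lemma opnorm_least: "c \<ge> 0 \<Longrightarrow> (\<And>x. vnorm I x \<le> 1 \<Longrightarrow> vnorm I (mat_apply I R x) \<le> c) \<Longrightarrow> opnorm I R \<le> c"
  unfolding opnorm_def
proof (rule cSup_least)
  have "vnorm I (mat_apply I R (\<lambda>i. 0)) \<in> {vnorm I (mat_apply I R x) |x. vnorm I x \<le> 1}"
    using vnorm_zero[of I] by auto
  then show "{vnorm I (mat_apply I R x) |x. vnorm I x \<le> 1} \<noteq> {}" by blast
qed blast

lemma vnorm_scale: "vnorm I (\<lambda>i. c * x i) = cmod c * vnorm I x"
  unfolding vnorm_L2 by (simp add: norm_mult L2_set_right_distrib)

lemma mat_apply_scale: "mat_apply I R (\<lambda>i. c * x i) = (\<lambda>i. c * mat_apply I R x i)"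
  unfolding mat_apply_def by (simp add: sum_distrib_left algebra_simps)

lemma opnorm_bound: "finite I \<Longrightarrow> vnorm I (mat_apply I R x) \<le> opnorm I R * vnorm I x"
proof (cases "vnorm I x = 0")
  case True
  assume fin: "finite I"
  then have "\<forall>i\<in>I. x i = 0" using True by (simp add: vnorm_L2 L2_set_eq_0_iff)
  then have "\<forall>i\<in>I. mat_apply I R x i = 0" unfolding mat_apply_def by simp
  then have "vnorm I (mat_apply I R x) = 0" by (simp add: vnorm_def)
  then show ?thesis using True by simp
next
  case False
  let ?t = "vnorm I x"
  have t: "?t > 0" using False vnorm_nonneg[of I x] by linarith
  have "vnorm I (\<lambda>i. complex_of_real (1 / ?t) * x i) = 1"
    unfolding vnorm_scale using t by (simp add: norm_divide)
  then have "vnorm I (mat_apply I R (\<lambda>i. complex_of_real (1 / ?t) * x i)) \<le> opnorm I R"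
    by (intro opnorm_upper) simp
  then have "vnorm I (mat_apply I R x) / ?t \<le> opnorm I R"
    unfolding mat_apply_scale vnorm_scale using t by (simp add: norm_divide)
  then show ?thesis using t by (simp add: field_simps)
qed

lemma cs_nonneg:
  assumes "\<And>p. p \<in> P \<Longrightarrow> F p \<ge> 0" "\<And>p. p \<in> P \<Longrightarrow> G p \<ge> 0"
  shows "(\<Sum>p\<in>P. F p * G p) \<le> sqrt (\<Sum>p\<in>P. (F p)^2) * sqrt (\<Sum>p\<in>P. (G p)^2)"
proof -
  have "(\<Sum>p\<in>P. F p * G p) = (\<Sum>p\<in>P. \<bar>F p\<bar> * \<bar>G p\<bar>)"
    using assms by (intro sum.cong) auto
  also have "\<dots> \<le> L2_set F P * L2_set G P" by (rule L2_set_mult_ineq)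
  finally show ?thesis by (simp add: L2_set_def)
qed

lemma sqrt_le_of_sq: "y \<le> x^2 \<Longrightarrow> 0 \<le> x \<Longrightarrow> sqrt y \<le> x"
  using real_sqrt_le_mono[of y "x^2"] by simp

lemma sum_pair: "(\<Sum>p\<in>A \<times> B. h (fst p) (snd p)) = (\<Sum>x\<in>A. \<Sum>y\<in>B. h x y)"
  by (simp add: sum.cartesian_product case_prod_unfold)

lemma schur_fact_bound:
  fixes Z W :: "'a \<Rightarrow> 'a \<Rightarrow> real" and Tc R :: "'a \<Rightarrow> 'a \<Rightarrow> complex"
  assumes fin: "finite I" and c0: "c \<ge> 0"
    and fact: "\<And>A B. A \<in> I \<Longrightarrow> B \<in> I \<Longrightarrow> Tc A B = complex_of_real (\<Sum>C\<in>I. Z A C * W C B)"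
    and rowZ: "\<And>A. A \<in> I \<Longrightarrow> (\<Sum>C\<in>I. (Z A C)^2) \<le> c"
    and colW: "\<And>B. B \<in> I \<Longrightarrow> (\<Sum>C\<in>I. (W C B)^2) \<le> c"
  shows "vnorm I (mat_apply I (schur Tc R) x) \<le> c * opnorm I R * vnorm I x"
proof -
  define y where "y = mat_apply I (schur Tc R) x"
  define xc where "xc C = (\<lambda>B. complex_of_real (W C B) * x B)" for C
  define u where "u C = mat_apply I R (xc C)" for C
  have yA: "y A = (\<Sum>C\<in>I. complex_of_real (Z A C) * u C A)" if A: "A \<in> I" for A
  proof -
    have "y A = (\<Sum>B\<in>I. (\<Sum>C\<in>I. complex_of_real (Z A C) * (R A B * (complex_of_real (W C B) * x B))))"
      unfolding y_def mat_apply_def schur_def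
      by (intro sum.cong refl) (simp add: fact[OF A] sum_distrib_left sum_distrib_right mult_ac)
    also have "\<dots> = (\<Sum>C\<in>I. complex_of_real (Z A C) * u C A)"
      unfolding u_def mat_apply_def xc_def by (subst sum.swap) (simp add: sum_distrib_left)
    finally show ?thesis .
  qed
  have cy: "cmod (y A) \<le> (\<Sum>C\<in>I. \<bar>Z A C\<bar> * cmod (u C A))" if "A \<in> I" for A
    unfolding yA[OF that] by (rule order_trans[OF norm_sum]) (simp add: norm_mult)
  let ?Y = "vnorm I y"
  have "?Y^2 = (\<Sum>A\<in>I. cmod (y A) * cmod (y A))" unfolding vnorm_sq by (simp add: power2_eq_square)
  also have "\<dots> \<le> (\<Sum>A\<in>I. cmod (y A) * (\<Sum>C\<in>I. \<bar>Z A C\<bar> * cmod (u C A)))"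
    by (intro sum_mono mult_left_mono cy) auto
  also have "\<dots> = (\<Sum>p\<in>I \<times> I. (cmod (y (fst p)) * \<bar>Z (fst p) (snd p)\<bar>) * cmod (u (snd p) (fst p)))"
    unfolding sum_pair[where h="\<lambda>A C. (cmod (y A) * \<bar>Z A C\<bar>) * cmod (u C A)"]
    by (simp add: sum_distrib_left mult.assoc)
  also have "\<dots> \<le> sqrt (\<Sum>p\<in>I \<times> I. (cmod (y (fst p)) * \<bar>Z (fst p) (snd p)\<bar>)^2)
                 * sqrt (\<Sum>p\<in>I \<times> I. (cmod (u (snd p) (fst p)))^2)"
    by (rule cs_nonneg) auto
  also have "\<dots> \<le> (sqrt c * ?Y) * (opnorm I R * sqrt c * vnorm I x)"
  proof (rule mult_mono)
    have "(\<Sum>p\<in>I \<times> I. (cmod (y (fst p)) * \<bar>Z (fst p) (snd p)\<bar>)^2)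
        = (\<Sum>A\<in>I. (cmod (y A))^2 * (\<Sum>C\<in>I. (Z A C)^2))"
      unfolding sum_pair[where h="\<lambda>A C. (cmod (y A) * \<bar>Z A C\<bar>)^2"]
      by (simp add: sum_distrib_left power_mult_distrib)
    also have "\<dots> \<le> (\<Sum>A\<in>I. (cmod (y A))^2 * c)"
      by (intro sum_mono mult_left_mono rowZ) auto
    also have "\<dots> = (\<Sum>A\<in>I. (cmod (y A))^2) * c" by (rule sum_distrib_right[symmetric])
    also have "\<dots> = (sqrt c * ?Y)^2"
      using c0 by (simp add: vnorm_sq power_mult_distrib)
    finally show "sqrt (\<Sum>p\<in>I \<times> I. (cmod (y (fst p)) * \<bar>Z (fst p) (snd p)\<bar>)^2) \<le> sqrt c * ?Y"
      using c0 vnorm_nonneg[of I y] by (intro sqrt_le_of_sq) auto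
  next
    have "(\<Sum>C\<in>I. (vnorm I (xc C))^2) = (\<Sum>C\<in>I. \<Sum>B\<in>I. (cmod (x B))^2 * (W C B)^2)"
      unfolding vnorm_sq xc_def by (simp add: norm_mult power_mult_distrib mult.commute)
    also have "\<dots> = (\<Sum>B\<in>I. (cmod (x B))^2 * (\<Sum>C\<in>I. (W C B)^2))"
      by (subst sum.swap) (simp add: sum_distrib_left)
    finally have inner: "(\<Sum>C\<in>I. (vnorm I (xc C))^2) = (\<Sum>B\<in>I. (cmod (x B))^2 * (\<Sum>C\<in>I. (W C B)^2))" .
    have "(\<Sum>p\<in>I \<times> I. (cmod (u (snd p) (fst p)))^2) = (\<Sum>C\<in>I. (vnorm I (u C))^2)"
      unfolding sum_pair[where h="\<lambda>A C. (cmod (u C A))^2"]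
      by (simp add: vnorm_sq) (rule sum.swap)
    also have "\<dots> \<le> (\<Sum>C\<in>I. (opnorm I R * vnorm I (xc C))^2)"
      unfolding u_def
      by (intro sum_mono power_mono opnorm_bound fin) (simp add: vnorm_nonneg)
    also have "\<dots> = (opnorm I R)^2 * (\<Sum>B\<in>I. (cmod (x B))^2 * (\<Sum>C\<in>I. (W C B)^2))"
      by (simp only: power_mult_distrib sum_distrib_left[symmetric] inner)
    also have "\<dots> \<le> (opnorm I R)^2 * (\<Sum>B\<in>I. (cmod (x B))^2 * c)"
      by (intro mult_left_mono sum_mono colW) auto
    also have "\<dots> = (opnorm I R)^2 * ((\<Sum>B\<in>I. (cmod (x B))^2) * c)" by (simp only: sum_distrib_right)
    also have "\<dots> = (opnorm I R * sqrt c * vnorm I x)^2"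
      using c0 by (simp add: vnorm_sq power_mult_distrib)
    finally show "sqrt (\<Sum>p\<in>I \<times> I. (cmod (u (snd p) (fst p)))^2) \<le> opnorm I R * sqrt c * vnorm I x"
      using c0 vnorm_nonneg[of I x] opnorm_nonneg[of I R] by (intro sqrt_le_of_sq) auto
  qed (auto simp: vnorm_nonneg c0 sum_nonneg)
  also have "(sqrt c * ?Y) * (opnorm I R * sqrt c * vnorm I x) = (sqrt c * sqrt c) * (?Y * opnorm I R * vnorm I x)"
    by (simp only: mult_ac)
  also have "sqrt c * sqrt c = c" using c0 by simp
  finally have "?Y^2 \<le> ?Y * (c * opnorm I R * vnorm I x)"
    by (simp only: mult_ac)
  then have "?Y \<le> c * opnorm I R * vnorm I x"
    using vnorm_nonneg[of I y] by (cases "?Y = 0") (auto simp: power2_eq_square c0 opnorm_nonneg vnorm_nonneg)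
  then show ?thesis by (simp add: y_def)
qed

lemma sum_le_vnorm: "cmod (\<Sum>A\<in>I. y A) \<le> sqrt (real (card I)) * vnorm I y"
proof -
  have "cmod (\<Sum>A\<in>I. y A) \<le> (\<Sum>A\<in>I. \<bar>cmod (y A)\<bar> * \<bar>1\<bar>)"
    by (rule order_trans[OF norm_sum]) simp
  also have "\<dots> \<le> L2_set (\<lambda>A. cmod (y A)) I * L2_set (\<lambda>A. 1) I" by (rule L2_set_mult_ineq)
  also have "\<dots> = sqrt (real (card I)) * vnorm I y" by (simp add: vnorm_L2 L2_set_constant)
  finally show ?thesis .
qed

lemma invol_isometry:
  fixes Sr :: "'a \<Rightarrow> 'a \<Rightarrow> real"
  assumes fin: "finite I"
    and sy: "\<And>A B. Sr A B = Sr B A"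
    and inv: "\<And>A B. A \<in> I \<Longrightarrow> B \<in> I \<Longrightarrow> (\<Sum>C\<in>I. Sr A C * Sr C B) = (if A = B then 1 else 0)"
  shows "vnorm I (mat_apply I (\<lambda>A B. complex_of_real (Sr A B)) x) = vnorm I x"
proof -
  let ?S = "\<lambda>A B. complex_of_real (Sr A B)"
  let ?y = "mat_apply I ?S x"
  have "complex_of_real ((vnorm I ?y)^2) = (\<Sum>A\<in>I. ?y A * cnj (?y A))"
    by (simp only: vnorm_sq of_real_sum complex_norm_square)
  also have "\<dots> = (\<Sum>A\<in>I. \<Sum>B\<in>I. \<Sum>B'\<in>I. (?S A B * x B) * (?S A B' * cnj (x B')))"
    unfolding mat_apply_def by (simp add: cnj_sum sum_product)
  also have "\<dots> = (\<Sum>B\<in>I. \<Sum>A\<in>I. \<Sum>B'\<in>I. (?S A B * x B) * (?S A B' * cnj (x B')))"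
    by (rule sum.swap)
  also have "\<dots> = (\<Sum>B\<in>I. \<Sum>B'\<in>I. \<Sum>A\<in>I. (?S A B * x B) * (?S A B' * cnj (x B')))"
    by (rule sum.cong[OF refl], rule sum.swap)
  also have "\<dots> = (\<Sum>B\<in>I. \<Sum>B'\<in>I. (x B * cnj (x B')) * complex_of_real (\<Sum>A\<in>I. Sr A B * Sr A B'))"
    by (intro sum.cong refl) (simp add: sum_distrib_left mult_ac)
  also have "\<dots> = (\<Sum>B\<in>I. \<Sum>B'\<in>I. if B' = B then x B * cnj (x B) else 0)"
  proof (intro sum.cong refl)
    fix B B' assume B: "B \<in> I" and B': "B' \<in> I"
    have "(\<Sum>A\<in>I. Sr A B * Sr A B') = (\<Sum>A\<in>I. Sr B A * Sr A B')" using sy by metis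
    also have "\<dots> = (if B = B' then 1 else 0)" by (rule inv[OF B B'])
    finally show "x B * cnj (x B') * complex_of_real (\<Sum>A\<in>I. Sr A B * Sr A B') = (if B' = B then x B * cnj (x B) else 0)"
      by auto
  qed
  also have "\<dots> = (\<Sum>B\<in>I. x B * cnj (x B))"
    using fin by simp
  also have "\<dots> = complex_of_real ((vnorm I x)^2)"
    by (simp only: vnorm_sq of_real_sum complex_norm_square)
  finally have "(vnorm I ?y)^2 = (vnorm I x)^2" using of_real_eq_iff by blast
  then show ?thesis using vnorm_nonneg[of I ?y] vnorm_nonneg[of I x] by (simp add: power2_eq_iff_nonneg)
qed

lemma invol_opnorm:
  fixes Sr :: "'a \<Rightarrow> 'a \<Rightarrow> real"
  assumes fin: "finite I"
    and sy: "\<And>A B. Sr A B = Sr B A"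
    and inv: "\<And>A B. A \<in> I \<Longrightarrow> B \<in> I \<Longrightarrow> (\<Sum>C\<in>I. Sr A C * Sr C B) = (if A = B then 1 else 0)"
  shows "opnorm I (\<lambda>A B. complex_of_real (Sr A B)) \<le> 1"
  by (rule opnorm_least) (auto simp: invol_isometry[OF fin sy inv])


lemma prod_even: "(\<Prod>i=1..n. real (2*i+2)) = 2^n * fact (n+1)"
  by (induct n) (simp_all add: prod.nat_ivl_Suc' algebra_simps)

lemma prod_odd: "(\<Prod>i=1..n. real (2*i+1)) * 2^n * fact n = fact (2*n+1)"
proof (induct n)
  case 0 then show ?case by simp
next
  case (Suc n)
  have "(\<Prod>i=1..Suc n. real (2*i+1)) * 2^(Suc n) * fact (Suc n)
      = ((\<Prod>i=1..n. real (2*i+1)) * 2^n * fact n) * (real (2*n+3) * 2 * real (Suc n))"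
    by (simp add: prod.nat_ivl_Suc' algebra_simps)
  also have "\<dots> = fact (2*n+1) * (real (2*n+3) * real (2*n+2))" using Suc by (simp add: algebra_simps)
  also have "\<dots> = fact (2 * Suc n + 1)"
    by (simp add: algebra_simps)
  finally show ?case .
qed

lemma num1: "2 ^ (2*n) / real ((2*n+1) choose n) = (\<Prod>i=1..n. real (2*i+2)) / (\<Prod>i=1..n. real (2*i+1))"
proof -
  have c: "real ((2*n+1) choose n) = fact (2*n+1) / (fact n * fact (n+1))"
    by (subst binomial_fact) auto
  have po: "(\<Prod>i=1..n. real (2*i+1)) = fact (2*n+1) / (2^n * fact n)"
    using prod_odd[of n] by (simp add: field_simps)
  have "(2::real) ^ (2*n) = 2^n * 2^n" by (simp add: power_add[symmetric] mult_2)
  then show ?thesis unfolding c po prod_even by (simp add: field_simps)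
qed

lemma num2: "(\<Prod>i=1..n. real (2*i+2)) / (\<Prod>i=1..n. real (2*i+1)) = (\<Prod>i=1..n. 1 + 1 / real (2*i+1))"
proof -
  have "(\<Prod>i=1..n. real (2*i+2)) / (\<Prod>i=1..n. real (2*i+1)) = (\<Prod>i=1..n. real (2*i+2) / real (2*i+1))"
    by (rule prod_dividef[symmetric])
  also have "\<dots> = (\<Prod>i=1..n. 1 + 1 / real (2*i+1))"
    by (intro prod.cong refl) (simp add: field_simps)
  finally show ?thesis .
qed

lemma sq_expand: "(d::real) \<noteq> 0 \<Longrightarrow> (1 + 1 / d)^2 = 1 + 2 / d + (1 / d)^2"
  by (simp add: power2_eq_square field_simps)

lemma prod_sq: "(\<Prod>i=1..n. 1 + 1 / real (2*i+1))^2 \<ge> (2 * real n + 3) / 3"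
proof (induct n)
  case 0 then show ?case by simp
next
  case (Suc n)
  let ?P = "\<Prod>i=1..n. 1 + 1 / real (2*i+1)"
  have m: "real (2 * Suc n + 1) = 2 * real n + 3" by simp
  have e: "(1 + 1 / (2 * real n + 3))^2 = 1 + 2 / (2 * real n + 3) + (1 / (2 * real n + 3))^2"
    by (rule sq_expand) (simp add: add_pos_pos)
  have q: "(1 + 1 / real (2 * Suc n + 1))^2 \<ge> 1 + 2 / (2 * real n + 3)"
    unfolding m e by simp
  have "(\<Prod>i=1..Suc n. 1 + 1 / real (2*i+1))^2 = ?P^2 * (1 + 1 / real (2 * Suc n + 1))^2"
    by (simp add: prod.nat_ivl_Suc' power_mult_distrib)
  also have "\<dots> \<ge> (2 * real n + 3) / 3 * (1 + 2 / (2 * real n + 3))"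
    by (rule mult_mono[OF Suc q]) (auto simp: field_simps)
  also have "(2 * real n + 3) / 3 * (1 + 2 / (2 * real n + 3)) = (2 * real (Suc n) + 3) / 3"
    by (simp add: field_simps add_pos_pos)
  finally show ?case .
qed

lemma prod_pos: "(\<Prod>i=1..n. 1 + 1 / real (2*i+1)) > 0"
  by (rule prod_pos) (auto simp: field_simps)

lemma ln3: "ln (3::real) < 2"
proof -
  have "exp (1::real) \<ge> 2" using exp_ge_add_one_self[of 1] by simp
  then have "exp (2::real) \<ge> 4"
    using mult_mono[of 2 "exp 1" 2 "exp (1::real)"] by (simp add: exp_add[symmetric])
  then have "(3::real) < exp 2" by simp
  then show ?thesis by (metis exp_less_cancel_iff exp_ln zero_less_numeral)
qed

lemma num3: "(\<Prod>i=1..n. 1 + 1 / real (2*i+1)) > ln (real (2*n+3)) / 2"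
proof -
  let ?P = "\<Prod>i=1..n. 1 + 1 / real (2*i+1)"
  let ?x = "real (2*n+3)"
  have x: "?x > 0" by simp
  have "ln ?x / 2 = ln (sqrt ?x)" by (simp add: ln_sqrt)
  also have "\<dots> = ln (sqrt ?x / sqrt 3) + ln (sqrt 3)" by (simp add: ln_div)
  also have "\<dots> \<le> (sqrt ?x / sqrt 3 - 1) + ln 3 / 2"
    by (intro add_mono ln_le_minus_one) (auto simp: ln_sqrt)
  also have "\<dots> < sqrt ?x / sqrt 3" using ln3 by simp
  also have "sqrt ?x / sqrt 3 = sqrt (?x / 3)" by (simp add: real_sqrt_divide)
  also have "\<dots> \<le> sqrt (?P^2)" using prod_sq[of n] by (intro real_sqrt_le_mono) (simp add: algebra_simps)
  also have "\<dots> = ?P" using prod_pos[of n] by simp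
  finally show ?thesis .
qed


section \<open>Permutation invariance\<close>

definition invm :: "(nat \<Rightarrow> nat) \<Rightarrow> nat set rmat \<Rightarrow> bool" where
  "invm s M \<longleftrightarrow> (\<forall>A B. M (s ` A) (s ` B) = M A B)"

lemma kv_Iv: "kneser_vertices n = Iv n"
  by (simp add: kneser_vertices_def Iv_def lv_def)

lemma perm_Iv:
  assumes s: "s permutes {1..2*n+1}"
  shows "s ` A \<in> Iv n \<longleftrightarrow> A \<in> Iv n"
proof -
  have inj: "inj s" using s by (rule permutes_inj)
  have c: "card (s ` A) = card A" using inj by (simp add: card_image inj_on_subset)
  have "s ` A \<subseteq> {1..2*n+1} \<longleftrightarrow> A \<subseteq> {1..2*n+1}"
  proof
    assume h: "s ` A \<subseteq> {1..2*n+1}"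
    show "A \<subseteq> {1..2*n+1}"
    proof
      fix x assume x: "x \<in> A"
      show "x \<in> {1..2*n+1}"
      proof (rule ccontr)
        assume nx: "x \<notin> {1..2*n+1}"
        have "s x = x" by (rule permutes_not_in[OF s nx])
        then show False using h x nx by auto
      qed
    qed
  next
    assume "A \<subseteq> {1..2*n+1}"
    then have "s ` A \<subseteq> s ` {1..2*n+1}" by (rule image_mono)
    then show "s ` A \<subseteq> {1..2*n+1}" using permutes_image[OF s] by simp
  qed
  then show ?thesis using c by (simp add: Iv_def lv_def)
qed

lemma bij_Iv:
  assumes s: "s permutes {1..2*n+1}"
  shows "bij_betw ((`) s) (Iv n) (Iv n)"
proof (rule bij_betw_byWitness[where f' = "(`) (inv s)"])
  have inj: "inj s" using s by (rule permutes_inj)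
  have surj: "surj s" using s by (rule permutes_surj)
  have si: "inv s permutes {1..2*n+1}" using s by (rule permutes_inv)
  show "\<forall>a\<in>Iv n. inv s ` s ` a = a" using inj by (simp add: image_inv_f_f)
  show "\<forall>a\<in>Iv n. s ` inv s ` a = a" using surj by (simp add: image_f_inv_f)
  show "(`) s ` Iv n \<subseteq> Iv n" using perm_Iv[OF s] by auto
  show "(`) (inv s) ` Iv n \<subseteq> Iv n" using perm_Iv[OF si] by auto
qed

lemma invm_Tm:
  assumes s: "s permutes {1..2*n+1}"
  shows "invm s (Tm n)"
proof -
  have inj: "inj s" using s by (rule permutes_inj)
  have "s ` A \<inter> s ` B = s ` (A \<inter> B)" for A B using inj by (simp add: image_Int)
  then show ?thesis unfolding invm_def Tm_def using perm_Iv[OF s] by simp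
qed

lemma invm_idm:
  assumes s: "s permutes {1..2*n+1}"
  shows "invm s (idm (Iv n))"
proof -
  have inj: "inj s" using s by (rule permutes_inj)
  show ?thesis unfolding invm_def idm_def using perm_Iv[OF s] inj by (simp add: inj_image_eq_iff)
qed

lemma invm_mm:
  assumes s: "s permutes {1..2*n+1}" and M: "invm s M" and N: "invm s N"
  shows "invm s (mm (Iv n) M N)"
  unfolding invm_def
proof (intro allI)
  fix A B
  have "(\<Sum>C\<in>Iv n. M (s ` A) C * N C (s ` B)) = (\<Sum>C\<in>Iv n. M (s ` A) (s ` C) * N (s ` C) (s ` B))"
    by (rule sum.reindex_bij_betw[OF bij_Iv[OF s], symmetric])
  also have "\<dots> = (\<Sum>C\<in>Iv n. M A C * N C B)" using M N by (simp add: invm_def)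
  finally show "mm (Iv n) M N (s ` A) (s ` B) = mm (Iv n) M N A B"
    unfolding mmr_def using perm_Iv[OF s] by simp
qed

lemma invm_peval:
  assumes s: "s permutes {1..2*n+1}" and M: "invm s M"
  shows "invm s (peval (Iv n) f M)"
proof (induct f rule: pCons_induct)
  case 0 then show ?case by (simp add: invm_def zm_def)
next
  case (pCons a p)
  have "invm s (mm (Iv n) M (peval (Iv n) p M))" by (rule invm_mm[OF s M pCons(2)])
  moreover have "invm s (idm (Iv n))" by (rule invm_idm[OF s])
  ultimately show ?case by (simp add: peval_pCons invm_def madd_def msc_def)
qed

lemma invm_Xn: "s permutes {1..2*n+1} \<Longrightarrow> invm s (Xn n)"
  unfolding Xn_def by (intro invm_mm invm_Tm)

lemma invm_Sm: "s permutes {1..2*n+1} \<Longrightarrow> invm s (Sm n)"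
  unfolding Sm_def Hm_def by (intro invm_mm invm_Tm invm_peval invm_Xn)

lemma invm_ZZ: "s permutes {1..2*n+1} \<Longrightarrow> invm s (mm (Iv n) (Zm n) (Zm n))"
  unfolding Zm_def by (intro invm_mm invm_peval invm_Xn)

section \<open>Transitivity\<close>

lemma trans_Iv:
  assumes A: "A \<in> Iv n" and B: "B \<in> Iv n"
  shows "\<exists>s. s permutes {1..2*n+1} \<and> s ` A = B"
proof -
  let ?S = "{1..2*n+1::nat}"
  have AS: "A \<subseteq> ?S" "card A = n" and BS: "B \<subseteq> ?S" "card B = n" using A B by (auto simp: Iv_def lv_def)
  have fA: "finite A" "finite B" using AS BS by (auto intro: finite_subset)
  obtain f where f: "bij_betw f A B" using finite_same_card_bij[OF fA] AS BS by auto
  have "card (?S - A) = card (?S - B)" using AS BS fA by (simp add: card_Diff_subset)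
  then obtain g where g: "bij_betw g (?S - A) (?S - B)" using finite_same_card_bij[of "?S - A" "?S - B"] by auto
  define s where "s x = (if x \<in> A then f x else if x \<in> ?S - A then g x else x)" for x
  have "bij_betw s A B" using f by (rule bij_betw_cong[THEN iffD1, rotated]) (simp add: s_def)
  moreover have "bij_betw s (?S - A) (?S - B)" using g by (rule bij_betw_cong[THEN iffD1, rotated]) (simp add: s_def)
  ultimately have "bij_betw s (A \<union> (?S - A)) (B \<union> (?S - B))"
    by (rule bij_betw_combine) auto
  moreover have "A \<union> (?S - A) = ?S" "B \<union> (?S - B) = ?S" using AS BS by auto
  ultimately have "bij_betw s ?S ?S" by simp
  then have "s permutes ?S" by (rule bij_imp_permutes) (use AS in \<open>auto simp: s_def\<close>)
  moreover have "s ` A = B" using \<open>bij_betw s A B\<close> by (simp add: bij_betw_def)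
  ultimately show ?thesis by blast
qed

lemma diag_ZZ:
  assumes A: "A \<in> Iv n"
  shows "mm (Iv n) (Zm n) (Zm n) A A = 2 ^ (2*n) / real ((2*n+1) choose n)"
proof -
  let ?M = "mm (Iv n) (Zm n) (Zm n)"
  have eq: "?M B B = ?M A A" if B: "B \<in> Iv n" for B
  proof -
    obtain s where s: "s permutes {1..2*n+1}" "s ` B = A" using trans_Iv[OF B A] by blast
    have "?M (s ` B) (s ` B) = ?M B B" using invm_ZZ[OF s(1)] by (simp add: invm_def)
    then show ?thesis using s by simp
  qed
  have "mtr (Iv n) ?M = real (card (Iv n)) * ?M A A"
    unfolding mtr_def by (simp add: eq)
  moreover have "card (Iv n) = (2*n+1) choose n" by (simp add: Iv_def card_lv)
  moreover have "((2*n+1) choose n) > 0" by simp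
  ultimately show ?thesis using mtr_ZZ[of n] by (simp add: field_simps)
qed

definition cval :: "nat \<Rightarrow> real" where "cval n = 2 ^ (2*n) / real ((2*n+1) choose n)"

lemma cval_nonneg: "cval n \<ge> 0" by (simp add: cval_def)

lemma kadj: "A \<in> Iv n \<Longrightarrow> B \<in> Iv n \<Longrightarrow> kneser_adj A B = complex_of_real (Tm n A B)"
  by (simp add: kneser_adj_def Tm_def)

lemma Zm_sym_ent: "Zm n A B = Zm n B A"
  using sym_Zm[of n] unfolding mT_def by metis
lemma Sm_sym_ent: "Sm n A B = Sm n B A"
  using sym_Sm[of n] unfolding mT_def by metis

lemma upper_bound: "opnorm (Iv n) (schur kneser_adj R) \<le> cval n * opnorm (Iv n) R"
proof (rule opnorm_least)
  show "0 \<le> cval n * opnorm (Iv n) R" by (intro mult_nonneg_nonneg cval_nonneg opnorm_nonneg)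
next
  fix x :: "nat set \<Rightarrow> complex" assume x: "vnorm (Iv n) x \<le> 1"
  have "vnorm (Iv n) (mat_apply (Iv n) (schur kneser_adj R) x) \<le> cval n * opnorm (Iv n) R * vnorm (Iv n) x"
  proof (rule schur_fact_bound[where Z = "Zm n" and W = "Wm n"])
    show "finite (Iv n)" by simp
    show "0 \<le> cval n" by (rule cval_nonneg)
  next
    fix A B assume A: "A \<in> Iv n" and B: "B \<in> Iv n"
    have "(\<Sum>C\<in>Iv n. Zm n A C * Wm n C B) = mm (Iv n) (Zm n) (Wm n) A B" using A B by (simp add: mmr_def)
    also have "\<dots> = Tm n A B" by (simp add: ZW)
    finally show "kneser_adj A B = complex_of_real (\<Sum>C\<in>Iv n. Zm n A C * Wm n C B)" using A B by (simp add: kadj)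
  next
    fix A assume A: "A \<in> Iv n"
    have "(\<Sum>C\<in>Iv n. (Zm n A C)^2) = mm (Iv n) (Zm n) (Zm n) A A"
      using A by (simp add: mmr_def power2_eq_square Zm_sym_ent[of n _ A])
    also have "\<dots> = cval n" using diag_ZZ[OF A] by (simp add: cval_def)
    finally show "(\<Sum>C\<in>Iv n. (Zm n A C)^2) \<le> cval n" by simp
  next
    fix B assume B: "B \<in> Iv n"
    have "(\<Sum>C\<in>Iv n. (Wm n C B)^2) = mm (Iv n) (mT (Wm n)) (Wm n) B B"
      using B by (simp add: mmr_def power2_eq_square mT_def)
    also have "\<dots> = cval n" using diag_ZZ[OF B] by (simp add: WW cval_def)
    finally show "(\<Sum>C\<in>Iv n. (Wm n C B)^2) \<le> cval n" by simp
  qed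
  also have "\<dots> \<le> cval n * opnorm (Iv n) R * 1"
    by (intro mult_left_mono mult_nonneg_nonneg cval_nonneg opnorm_nonneg x)
  finally show "vnorm (Iv n) (mat_apply (Iv n) (schur kneser_adj R) x) \<le> cval n * opnorm (Iv n) R" by simp
qed

definition cS :: "nat \<Rightarrow> nat set \<Rightarrow> nat set \<Rightarrow> complex" where
  "cS n = (\<lambda>A B. complex_of_real (Sm n A B))"

lemma cS_norm: "opnorm (Iv n) (cS n) \<le> 1"
  unfolding cS_def
proof (rule invol_opnorm)
  fix A B assume A: "A \<in> Iv n" and B: "B \<in> Iv n"
  have "(\<Sum>C\<in>Iv n. Sm n A C * Sm n C B) = mm (Iv n) (Sm n) (Sm n) A B" using A B by (simp add: mmr_def)
  then show "(\<Sum>C\<in>Iv n. Sm n A C * Sm n C B) = (if A = B then 1 else 0)" using A by (simp add: SS idm_def)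
qed (auto simp: Sm_sym_ent)

lemma lower_bound: "opnorm (Iv n) (schur kneser_adj (cS n)) \<ge> cval n"
proof -
  let ?I = "Iv n"
  let ?N = "real (card ?I)"
  have N: "?N > 0" using card_lv[of "2*n+1" n] by (simp add: Iv_def)
  define x0 where "x0 = (\<lambda>A::nat set. complex_of_real (1 / sqrt ?N))"
  have vx: "vnorm ?I x0 = 1" proof -
    have "Iv n \<noteq> {}" using N by auto
    then show ?thesis using N by (simp add: x0_def vnorm_L2 L2_set_constant norm_divide)
  qed
  let ?y = "mat_apply ?I (schur kneser_adj (cS n)) x0"
  have "(\<Sum>A\<in>?I. ?y A) = (\<Sum>A\<in>?I. \<Sum>B\<in>?I. complex_of_real (1 / sqrt ?N * (Tm n A B * Sm n A B)))"
    unfolding mat_apply_def schur_def x0_def cS_def by (intro sum.cong refl) (simp add: kadj mult_ac)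
  also have "\<dots> = complex_of_real (1 / sqrt ?N * (\<Sum>A\<in>?I. \<Sum>B\<in>?I. Tm n A B * Sm n A B))"
    by (simp add: sum_distrib_left)
  also have "(\<Sum>A\<in>?I. \<Sum>B\<in>?I. Tm n A B * Sm n A B) = mtr ?I (mm ?I (Tm n) (Sm n))"
    unfolding mtr_def mmr_def by (intro sum.cong refl) (simp add: Sm_sym_ent[of n _ _])
  also have "\<dots> = 2 ^ (2*n)" by (rule mtr_TS)
  finally have sy: "(\<Sum>A\<in>?I. ?y A) = complex_of_real (1 / sqrt ?N * 2 ^ (2*n))" .
  have "1 / sqrt ?N * 2 ^ (2*n) \<le> sqrt ?N * vnorm ?I ?y"
    using sum_le_vnorm[of ?y ?I] unfolding sy norm_of_real by simp
  then have "2 ^ (2*n) \<le> sqrt ?N * (sqrt ?N * vnorm ?I ?y)"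
    using N by (simp add: field_simps)
  also have "sqrt ?N * (sqrt ?N * vnorm ?I ?y) = (sqrt ?N * sqrt ?N) * vnorm ?I ?y" by (simp only: mult.assoc)
  also have "sqrt ?N * sqrt ?N = ?N" using N by simp
  finally have "2 ^ (2*n) \<le> ?N * vnorm ?I ?y" .
  then have "2 ^ (2*n) / ?N \<le> vnorm ?I ?y"
    using N by (simp add: pos_divide_le_eq mult.commute)
  also have "\<dots> \<le> opnorm ?I (schur kneser_adj (cS n))" using vx by (intro opnorm_upper) simp
  finally show ?thesis using card_lv[of "2*n+1" n] by (simp add: cval_def Iv_def)
qed

lemma cS_commutant: "cS n \<in> kneser_commutant n"
  unfolding kneser_commutant_def kv_Iv
proof (intro CollectI allI impI ballI)
  fix s A B assume s: "s permutes {1..2*n+1}" and A: "A \<in> Iv n" and B: "B \<in> Iv n"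
  have inv: "cS n C D = cS n (s ` C) (s ` D)" for C D using invm_Sm[OF s] by (simp add: invm_def cS_def)
  have sB: "s ` B \<in> Iv n" using perm_Iv[OF s] B by simp
  have "mat_mult (Iv n) (perm_mat s) (cS n) A B = (\<Sum>C\<in>Iv n. (if A = s ` C then 1 else 0) * cS n (s ` C) (s ` B))"
    unfolding mat_mult_def perm_mat_def by (intro sum.cong refl) (simp add: inv[of _ B])
  also have "\<dots> = (\<Sum>D\<in>Iv n. (if A = D then 1 else 0) * cS n D (s ` B))"
    by (rule sum.reindex_bij_betw[OF bij_Iv[OF s]])
  also have "\<dots> = (\<Sum>D\<in>Iv n. if A = D then cS n D (s ` B) else 0)" by (intro sum.cong) auto
  also have "\<dots> = cS n A (s ` B)" using A by simp
  also have "\<dots> = (\<Sum>C\<in>Iv n. if C = s ` B then cS n A C else 0)" using sB by simp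
  also have "\<dots> = (\<Sum>C\<in>Iv n. cS n A C * (if C = s ` B then 1 else 0))" by (intro sum.cong) auto
  also have "\<dots> = mat_mult (Iv n) (cS n) (perm_mat s) A B"
    unfolding mat_mult_def perm_mat_def by simp
  finally show "mat_mult (Iv n) (perm_mat s) (cS n) A B = mat_mult (Iv n) (cS n) (perm_mat s) A B" .
qed

lemma schur_sup:
  assumes "cS n \<in> Sub"
  shows "schur_norm_on (Iv n) kneser_adj Sub = cval n"
  unfolding schur_norm_on_def
proof (rule cSup_eq_maximum)
  have "opnorm (Iv n) (schur kneser_adj (cS n)) \<le> cval n * opnorm (Iv n) (cS n)" by (rule upper_bound)
  also have "\<dots> \<le> cval n" using cS_norm cval_nonneg by (simp add: mult_left_le)
  finally have "opnorm (Iv n) (schur kneser_adj (cS n)) = cval n" using lower_bound[of n] by simp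
  then show "cval n \<in> {opnorm (Iv n) (schur kneser_adj R) |R. R \<in> Sub \<and> opnorm (Iv n) R \<le> 1}"
    using assms cS_norm by force
next
  fix v assume "v \<in> {opnorm (Iv n) (schur kneser_adj R) |R. R \<in> Sub \<and> opnorm (Iv n) R \<le> 1}"
  then obtain R where v: "v = opnorm (Iv n) (schur kneser_adj R)" and R: "opnorm (Iv n) R \<le> 1" by blast
  have "v \<le> cval n * opnorm (Iv n) R" using v upper_bound by simp
  also have "\<dots> \<le> cval n" using R cval_nonneg by (simp add: mult_left_le)
  finally show "v \<le> cval n" .
qed

theorem theorem5p5:
  fixes n :: nat
  assumes "n \<ge> 1"
  shows "schur_norm (kneser_vertices n) kneser_adj
           = schur_norm_on (kneser_vertices n) kneser_adj (kneser_commutant n)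
       \<and> schur_norm_on (kneser_vertices n) kneser_adj (kneser_commutant n)
           = 2 ^ (2*n) / real ((2*n+1) choose n)
       \<and> 2 ^ (2*n) / real ((2*n+1) choose n)
           = (\<Prod>i=1..n. real (2*i+2)) / (\<Prod>i=1..n. real (2*i+1))
       \<and> (\<Prod>i=1..n. real (2*i+2)) / (\<Prod>i=1..n. real (2*i+1))
           = (\<Prod>i=1..n. 1 + 1 / real (2*i+1))
       \<and> (\<Prod>i=1..n. 1 + 1 / real (2*i+1)) > ln (real (2*n+3)) / 2"
proof -
  have a: "schur_norm (kneser_vertices n) kneser_adj = cval n"
    unfolding schur_norm_def kv_Iv by (rule schur_sup) simp
  have b: "schur_norm_on (kneser_vertices n) kneser_adj (kneser_commutant n) = cval n"
    unfolding kv_Iv by (rule schur_sup) (rule cS_commutant[unfolded kv_Iv])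
  show ?thesis using a b num1[of n] num2[of n] num3[of n] by (simp add: cval_def)
qed


end
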